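(* On the set of persistence diagrams all of whose points have strictly positive coordinates, let $A\sim A'$ iff $A=cA'$ for some $c>0$. Then $D_S([A],[B]):=\overline{d_S}(\log A,\log B)$ is well defined on equivalence classes (independent of representatives) and is a metric on the set of equivalence classes.
   Context: A persistence diagram here is a finite multiset of points $(a_x,a_y)$ with $0<a_x<a_y<\infty$, together with the diagonal $\Delta$ of infinite multiplicity. $cA=\{(ca_x,ca_y)\}$ for $c>0$. $\log A=\{(\log a_x,\log a_y): a\in A\}$ (a finite multiset of points above the diagonal, plus the diagonal). For such multisets and $s\in\mathbb{R}$, $A+s=\{(a_x+s,a_y+s)\}$. The bottleneck distance $d_\infty(A,B)$ is the infimum over multi-bijections between $A\cup\Delta$ and $B\cup\Delta$ of the maximal $\ell^\infty$ matching distance. The shift-invariant bottleneck distance is $\overline{d_S}(A,B)=\inf_{s\in\mathbb{R}}d_\infty(A+s,B)$. *)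

theory Defs
  imports "HOL-Analysis.Analysis" "HOL-Library.Multiset"
begin

type_synonym pt = "real \<times> real"

text \<open>Persistence diagrams with strictly positive coordinates: finite multisets of
  points (x,y) with 0 < x < y (the diagonal, of infinite multiplicity, is implicit).\<close>
definition PD :: "pt multiset set" where
  "PD = {A. \<forall>p\<in>#A. 0 < fst p \<and> fst p < snd p}"

definition scaleD :: "real \<Rightarrow> pt multiset \<Rightarrow> pt multiset" where
  "scaleD c A = image_mset (\<lambda>(x, y). (c * x, c * y)) A"

definition logD :: "pt multiset \<Rightarrow> pt multiset" where
  "logD A = image_mset (\<lambda>(x, y). (ln x, ln y)) A"

definition shiftD :: "real \<Rightarrow> pt multiset \<Rightarrow> pt multiset" where
  "shiftD s A = image_mset (\<lambda>(x, y). (x + s, y + s)) A"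

definition on_diag :: "pt \<Rightarrow> bool" where
  "on_diag p \<longleftrightarrow> fst p = snd p"

definition linf :: "pt \<Rightarrow> pt \<Rightarrow> real" where
  "linf p q = max \<bar>fst p - fst q\<bar> \<bar>snd p - snd q\<bar>"

text \<open>A (finite part of a) multi-bijection between A \<union> \<Delta> and B \<union> \<Delta>:
  a finite multiset of matched pairs, each side being a point of the diagram or a
  diagonal point, such that every off-diagonal point of A (resp. B) is used exactly
  with its multiplicity. The remaining (infinitely many) diagonal points are matched
  identically, at cost 0.\<close>
definition is_matching :: "pt multiset \<Rightarrow> pt multiset \<Rightarrow> (pt \<times> pt) multiset \<Rightarrow> bool" where
  "is_matching A B M \<longleftrightarrow>
     filter_mset (\<lambda>p. \<not> on_diag p) (image_mset fst M) = A \<and>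
     filter_mset (\<lambda>q. \<not> on_diag q) (image_mset snd M) = B"

definition match_cost :: "(pt \<times> pt) multiset \<Rightarrow> real" where
  "match_cost M = Max (insert 0 ((\<lambda>(p, q). linf p q) ` set_mset M))"

definition bottleneck :: "pt multiset \<Rightarrow> pt multiset \<Rightarrow> real" where
  "bottleneck A B = Inf {match_cost M | M. is_matching A B M}"

definition dS_bar :: "pt multiset \<Rightarrow> pt multiset \<Rightarrow> real" where
  "dS_bar A B = (INF s. bottleneck (shiftD s A) B)"

definition scale_rel :: "(pt multiset \<times> pt multiset) set" where
  "scale_rel = {(A, A'). A \<in> PD \<and> A' \<in> PD \<and> (\<exists>c>0. A = scaleD c A')}"

definition PDclasses :: "pt multiset set set" where
  "PDclasses = PD // scale_rel"

text \<open>D_S on equivalence classes, via chosen representatives (0 outside the classes)\<close>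
definition D_S :: "pt multiset set \<Rightarrow> pt multiset set \<Rightarrow> real" where
  "D_S X Y = (if X \<in> PDclasses \<and> Y \<in> PDclasses
              then dS_bar (logD (SOME A. A \<in> X)) (logD (SOME B. B \<in> Y)) else 0)"

end

theory Submission
  imports Defs
begin

definition good :: "pt multiset \<Rightarrow> bool" where
  "good P \<longleftrightarrow> (\<forall>p\<in>#P. fst p < snd p)"

lemma cost_le_iff: "match_cost M \<le> e \<longleftrightarrow> 0 \<le> e \<and> (\<forall>x\<in>#M. linf (fst x) (snd x) \<le> e)"
  unfolding match_cost_def by (auto simp: split_beta)

lemma cost_less_iff: "match_cost M < e \<longleftrightarrow> 0 < e \<and> (\<forall>x\<in>#M. linf (fst x) (snd x) < e)"
  unfolding match_cost_def by (auto simp: split_beta)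

lemma cost_ge0: "0 \<le> match_cost M"
  unfolding match_cost_def by (auto simp: split_beta)

lemma linf_le_cost: "x \<in># M \<Longrightarrow> linf (fst x) (snd x) \<le> match_cost M"
  using cost_le_iff[of M "match_cost M"] by auto

lemma filter_all: "(\<And>x. x \<in># M \<Longrightarrow> P x) \<Longrightarrow> filter_mset P M = M"
  by (metis filter_mset_True filter_mset_cong0)

lemma filter_none: "(\<And>x. x \<in># M \<Longrightarrow> \<not> P x) \<Longrightarrow> filter_mset P M = {#}"
  by (metis filter_mset_False filter_mset_cong0)

lemma exists_matching: assumes "good A" "good B" shows "\<exists>M. is_matching A B M"
proof -
  let ?M = "image_mset (\<lambda>p. (p,(0::real,0::real))) A + image_mset (\<lambda>q. ((0,0),q)) B"
  have fA: "filter_mset (\<lambda>p. fst p \<noteq> snd p) A = A" using assms(1) unfolding good_def on_diag_def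
    by (intro filter_all) auto
  have fB: "filter_mset (\<lambda>p. fst p \<noteq> snd p) B = B" using assms(2) unfolding good_def on_diag_def
    by (intro filter_all) auto
  have "is_matching A B ?M"
    unfolding is_matching_def
    by (simp add: fA fB on_diag_def multiset.map_comp o_def filter_mset_image_mset)
  thus ?thesis by blast
qed

lemma linf_triangle: "linf a c \<le> linf a b + linf b c"
  unfolding linf_def by (auto simp: max_def abs_if)

lemma linf_sym: "linf a b = linf b a"
  unfolding linf_def by (simp add: abs_minus_commute)

lemma linf_ge0: "0 \<le> linf a b" unfolding linf_def by simp

lemma compose_matching:
  assumes "is_matching A B M1" "is_matching B C M2"
    "\<forall>y\<in>#M1. linf (fst y) (snd y) \<le> e1" "\<forall>z\<in>#M2. linf (fst z) (snd z) \<le> e2" "0 \<le> e1" "0 \<le> e2"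
  shows "\<exists>M. is_matching A C M \<and> (\<forall>x\<in>#M. linf (fst x) (snd x) \<le> e1 + e2)"
  using assms
proof (induction B arbitrary: A C M1 M2)
  case empty
  have "is_matching A C (M1 + M2)" using empty.prems(1,2) unfolding is_matching_def by simp
  moreover have "\<forall>x\<in>#M1 + M2. linf (fst x) (snd x) \<le> e1 + e2"
    using empty.prems(3-6) by (auto intro: add_increasing add_increasing2)
  ultimately show ?case by blast
next
  case (add b B)
  have "b \<in># filter_mset (\<lambda>q. \<not> on_diag q) (image_mset snd M1)"
    using add.prems(1) unfolding is_matching_def by simp
  then obtain a where ab: "(a,b) \<in># M1" and nb: "\<not> on_diag b" by auto
  have "b \<in># filter_mset (\<lambda>q. \<not> on_diag q) (image_mset fst M2)"
    using add.prems(2) unfolding is_matching_def by simp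
  then obtain c where bc: "(b,c) \<in># M2" by auto
  define M1' where "M1' = M1 - {#(a,b)#}"
  define M2' where "M2' = M2 - {#(b,c)#}"
  have M1: "M1 = add_mset (a,b) M1'" using ab unfolding M1'_def by simp
  have M2: "M2 = add_mset (b,c) M2'" using bc unfolding M2'_def by simp
  define A' where "A' = filter_mset (\<lambda>q. \<not> on_diag q) (image_mset fst M1')"
  define C' where "C' = filter_mset (\<lambda>q. \<not> on_diag q) (image_mset snd M2')"
  have m1: "is_matching A' B M1'" using add.prems(1) nb unfolding is_matching_def A'_def M1 by simp
  have m2: "is_matching B C' M2'" using add.prems(2) nb unfolding is_matching_def C'_def M2 by simp
  from add.IH[OF m1 m2] add.prems(3-6) obtain M' where
    M': "is_matching A' C' M'" "\<forall>x\<in>#M'. linf (fst x) (snd x) \<le> e1 + e2"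
    unfolding M1 M2 by auto
  have "is_matching A C (add_mset (a,c) M')"
    using add.prems(1,2) M'(1) unfolding is_matching_def M1 M2 A'_def C'_def by auto
  moreover have "linf a c \<le> e1 + e2"
    using linf_triangle[of a c b] add.prems(3,4) ab bc by fastforce
  ultimately show ?case using M'(2) by (intro exI[of _ "add_mset (a,c) M'"]) auto
qed

lemma bn_le: "is_matching A B M \<Longrightarrow> bottleneck A B \<le> match_cost M"
  unfolding bottleneck_def by (rule cInf_lower) (auto intro: cost_ge0 simp: bdd_below_def)

lemma bn_ge0: "good A \<Longrightarrow> good B \<Longrightarrow> 0 \<le> bottleneck A B"
  unfolding bottleneck_def using exists_matching[of A B]
  by (intro cInf_greatest) (auto intro: cost_ge0)

lemma bn_less: assumes "good A" "good B" "bottleneck A B < e" shows "\<exists>M. is_matching A B M \<and> match_cost M < e"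
proof -
  have "{match_cost M | M. is_matching A B M} \<noteq> {}" using exists_matching[OF assms(1,2)] by auto
  from cInf_lessD[OF this assms(3)[unfolded bottleneck_def]] show ?thesis by auto
qed

lemma bn_triangle: assumes "good A" "good B" "good C"
  shows "bottleneck A C \<le> bottleneck A B + bottleneck B C"
proof (rule ccontr)
  assume nt: "\<not> bottleneck A C \<le> bottleneck A B + bottleneck B C"
  define d where "d = (bottleneck A C - bottleneck A B - bottleneck B C) / 4"
  have d: "0 < d" "bottleneck A B + bottleneck B C + 3*d < bottleneck A C"
    using nt unfolding d_def by (auto simp: field_simps)
  obtain M1 where M1: "is_matching A B M1" "match_cost M1 < bottleneck A B + d"
    using bn_less[OF assms(1,2), of "bottleneck A B + d"] d by auto
  obtain M2 where M2: "is_matching B C M2" "match_cost M2 < bottleneck B C + d"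
    using bn_less[OF assms(2,3), of "bottleneck B C + d"] d by auto
  obtain M where M: "is_matching A C M" "\<forall>x\<in>#M. linf (fst x) (snd x) \<le> match_cost M1 + match_cost M2"
    using compose_matching[OF M1(1) M2(1) _ _ cost_ge0 cost_ge0] linf_le_cost by blast
  have "match_cost M \<le> match_cost M1 + match_cost M2"
    using M(2) cost_ge0[of M1] cost_ge0[of M2] by (simp add: cost_le_iff)
  with bn_le[OF M(1)] M1 M2 d show False by linarith
qed

definition shp :: "real \<Rightarrow> pt \<Rightarrow> pt" where "shp s p = (fst p + s, snd p + s)"

lemma shiftD_alt: "shiftD s A = image_mset (shp s) A"
  unfolding shiftD_def shp_def by (rule image_mset_cong) (auto simp: split_beta)

lemma shift_shift: "shiftD a (shiftD b A) = shiftD (b + a) A"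
  unfolding shiftD_alt shp_def by (simp add: multiset.map_comp o_def add.assoc)

lemma shift0: "shiftD 0 A = A"
  unfolding shiftD_alt shp_def by simp

lemma good_shift: "good A \<Longrightarrow> good (shiftD s A)"
  unfolding good_def shiftD_alt shp_def by auto

lemma bn_shift_le: assumes "good A" "good B"
  shows "bottleneck (shiftD u A) (shiftD u B) \<le> bottleneck A B"
  unfolding bottleneck_def[of A B]
proof (rule cInf_greatest)
  show "{match_cost M |M. is_matching A B M} \<noteq> {}" using exists_matching[OF assms] by auto
next
  fix x assume "x \<in> {match_cost M |M. is_matching A B M}"
  then obtain M where M: "is_matching A B M" "x = match_cost M" by auto
  define M' where "M' = image_mset (\<lambda>pq. (shp u (fst pq), shp u (snd pq))) M"
  have "is_matching (shiftD u A) (shiftD u B) M'"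
    using M(1) unfolding is_matching_def M'_def shiftD_alt
    by (auto simp: multiset.map_comp o_def filter_mset_image_mset on_diag_def shp_def)
  moreover have "match_cost M' \<le> match_cost M"
    unfolding cost_le_iff M'_def using linf_le_cost[of _ M]
    by (auto simp: cost_ge0 linf_def shp_def)
  ultimately show "bottleneck (shiftD u A) (shiftD u B) \<le> x" using M(2) bn_le by fastforce
qed

lemma bn_shift: assumes "good A" "good B"
  shows "bottleneck (shiftD u A) (shiftD u B) = bottleneck A B"
proof -
  have "bottleneck A B = bottleneck (shiftD (-u) (shiftD u A)) (shiftD (-u) (shiftD u B))"
    by (simp add: shift_shift shift0)
  also have "\<dots> \<le> bottleneck (shiftD u A) (shiftD u B)"
    by (rule bn_shift_le) (auto intro: good_shift assms)
  finally show ?thesis using bn_shift_le[OF assms, of u] by linarith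
qed

lemma bn_sym_le: assumes "good A" "good B"
  shows "bottleneck B A \<le> bottleneck A B"
  unfolding bottleneck_def[of A B]
proof (rule cInf_greatest)
  show "{match_cost M |M. is_matching A B M} \<noteq> {}" using exists_matching[OF assms] by auto
next
  fix x assume "x \<in> {match_cost M |M. is_matching A B M}"
  then obtain M where M: "is_matching A B M" "x = match_cost M" by auto
  define M' where "M' = image_mset (\<lambda>pq. (snd pq, fst pq)) M"
  have "is_matching B A M'"
    using M(1) unfolding is_matching_def M'_def
    by (auto simp: multiset.map_comp o_def)
  moreover have "match_cost M' \<le> match_cost M"
    unfolding cost_le_iff M'_def using linf_le_cost[of _ M]
    by (auto simp: cost_ge0 linf_sym)
  ultimately show "bottleneck B A \<le> x" using M(2) bn_le by fastforce
qed

lemma bn_sym: "good A \<Longrightarrow> good B \<Longrightarrow> bottleneck B A = bottleneck A B"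
  using bn_sym_le[of A B] bn_sym_le[of B A] by linarith

lemma bn_refl: assumes "good A" shows "bottleneck A A \<le> 0"
proof -
  define M where "M = image_mset (\<lambda>p. (p,p)) A"
  have fA: "filter_mset (\<lambda>p. \<not> on_diag p) A = A" using assms(1) unfolding good_def on_diag_def
    by (intro filter_all) auto
  have "is_matching A A M" unfolding is_matching_def M_def by (simp add: multiset.map_comp o_def fA)
  moreover have "match_cost M \<le> 0" unfolding cost_le_iff M_def by (auto simp: linf_def)
  ultimately show ?thesis using bn_le by fastforce
qed

lemma dS_le: "good P \<Longrightarrow> good Q \<Longrightarrow> dS_bar P Q \<le> bottleneck (shiftD s P) Q"
  unfolding dS_bar_def
  by (rule cINF_lower) (auto simp: bdd_below_def intro!: exI[of _ 0] bn_ge0 good_shift)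

lemma dS_ge0: "good P \<Longrightarrow> good Q \<Longrightarrow> 0 \<le> dS_bar P Q"
  unfolding dS_bar_def
  by (rule cINF_greatest) (auto intro!: bn_ge0 good_shift)

lemma dS_less: assumes "dS_bar P Q < e" shows "\<exists>s. bottleneck (shiftD s P) Q < e"
proof -
  have "(\<lambda>s. bottleneck (shiftD s P) Q) ` UNIV \<noteq> {}" by auto
  from cInf_lessD[OF this assms[unfolded dS_bar_def]] show ?thesis by auto
qed

lemma dS_shift1: assumes "good P" "good Q" shows "dS_bar (shiftD u P) Q = dS_bar P Q"
proof -
  have "dS_bar (shiftD u P) Q \<le> dS_bar P Q"
    unfolding dS_bar_def[of P Q]
  proof (rule cINF_greatest)
    fix s show "dS_bar (shiftD u P) Q \<le> bottleneck (shiftD s P) Q"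
      using dS_le[OF good_shift[OF assms(1)] assms(2), of u "s - u"] by (simp add: shift_shift)
  qed auto
  moreover have "dS_bar P Q \<le> dS_bar (shiftD u P) Q"
    unfolding dS_bar_def[of "shiftD u P" Q]
  proof (rule cINF_greatest)
    fix s show "dS_bar P Q \<le> bottleneck (shiftD s (shiftD u P)) Q"
      using dS_le[OF assms, of "u + s"] by (simp add: shift_shift)
  qed auto
  ultimately show ?thesis by linarith
qed

lemma dS_shift2: assumes "good P" "good Q" shows "dS_bar P (shiftD u Q) = dS_bar P Q"
proof -
  have e: "bottleneck (shiftD s P) (shiftD u Q) = bottleneck (shiftD (s - u) P) Q" for s
  proof -
    have "bottleneck (shiftD s P) (shiftD u Q) = bottleneck (shiftD u (shiftD (s - u) P)) (shiftD u Q)"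
      by (simp add: shift_shift)
    also have "\<dots> = bottleneck (shiftD (s - u) P) Q" by (rule bn_shift) (auto intro: good_shift assms)
    finally show ?thesis .
  qed
  have "dS_bar P (shiftD u Q) \<le> dS_bar P Q"
    unfolding dS_bar_def[of P Q]
  proof (rule cINF_greatest)
    fix s show "dS_bar P (shiftD u Q) \<le> bottleneck (shiftD s P) Q"
      using dS_le[of P "shiftD u Q" "s + u"] good_shift[OF assms(2)] assms(1) e[of "s + u"] by simp
  qed auto
  moreover have "dS_bar P Q \<le> dS_bar P (shiftD u Q)"
    unfolding dS_bar_def[of P "shiftD u Q"]
  proof (rule cINF_greatest)
    fix s show "dS_bar P Q \<le> bottleneck (shiftD s P) (shiftD u Q)"
      using dS_le[OF assms, of "s - u"] e[of s] by simp
  qed auto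
  ultimately show ?thesis by linarith
qed

lemma dS_sym: assumes "good P" "good Q" shows "dS_bar P Q = dS_bar Q P"
proof -
  have e: "bottleneck (shiftD s P) Q = bottleneck (shiftD (-s) Q) P" for s
  proof -
    have "bottleneck (shiftD s P) Q = bottleneck (shiftD (-s) (shiftD s P)) (shiftD (-s) Q)"
      by (rule bn_shift[symmetric]) (auto intro: good_shift assms)
    also have "\<dots> = bottleneck P (shiftD (-s) Q)" by (simp add: shift_shift shift0)
    also have "\<dots> = bottleneck (shiftD (-s) Q) P" by (rule bn_sym[symmetric]) (auto intro: good_shift assms)
    finally show ?thesis .
  qed
  have "dS_bar P Q \<le> dS_bar Q P" if "good P" "good Q" for P Q
    unfolding dS_bar_def[of Q P]
  proof (rule cINF_greatest)
    fix s
    have "bottleneck (shiftD (-s) P) Q = bottleneck (shiftD s Q) P"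
      using bn_shift[of "shiftD (-s) P" Q s] bn_sym that
      by (simp add: shift_shift shift0 good_shift)
    then show "dS_bar P Q \<le> bottleneck (shiftD s Q) P"
      using dS_le[OF that, of "-s"] by simp
  qed auto
  then show ?thesis using assms by (meson order_antisym)
qed

lemma dS_triangle: assumes "good P" "good Q" "good R"
  shows "dS_bar P R \<le> dS_bar P Q + dS_bar Q R"
proof (rule ccontr)
  assume nt: "\<not> dS_bar P R \<le> dS_bar P Q + dS_bar Q R"
  define d where "d = (dS_bar P R - dS_bar P Q - dS_bar Q R) / 4"
  have d: "0 < d" "dS_bar P Q + dS_bar Q R + 3*d < dS_bar P R"
    using nt unfolding d_def by (auto simp: field_simps)
  obtain s where s: "bottleneck (shiftD s P) Q < dS_bar P Q + d" using dS_less d(1) by (metis less_add_same_cancel1)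
  obtain t where t: "bottleneck (shiftD t Q) R < dS_bar Q R + d" using dS_less d(1) by (metis less_add_same_cancel1)
  have "dS_bar P R \<le> bottleneck (shiftD (s + t) P) R" by (rule dS_le[OF assms(1,3)])
  also have "\<dots> \<le> bottleneck (shiftD (s + t) P) (shiftD t Q) + bottleneck (shiftD t Q) R"
    by (rule bn_triangle) (auto intro: good_shift assms)
  also have "bottleneck (shiftD (s + t) P) (shiftD t Q) = bottleneck (shiftD s P) Q"
    using bn_shift[of "shiftD s P" Q t] by (simp add: shift_shift good_shift assms)
  finally show False using s t d by linarith
qed

lemma linf_diag: "on_diag d \<Longrightarrow> (snd p - fst p) / 2 \<le> linf p d"
  unfolding linf_def on_diag_def by (auto simp: max_def abs_if)

lemma dS_zero: assumes gP: "good P" and gQ: "good Q" and z: "dS_bar P Q \<le> 0"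
  shows "\<exists>t. Q = shiftD t P"
proof -
  define V where "V = (\<lambda>(p,q). fst q - fst p) ` (set_mset P \<times> set_mset Q)
      \<union> (\<lambda>(p,q). snd q - snd p) ` (set_mset P \<times> set_mset Q)"
  define G where "G = (\<lambda>p. (snd p - fst p) / 2) ` set_mset (P + Q)
      \<union> (\<lambda>(v,w). \<bar>v - w\<bar> / 2) ` {(v,w). v \<in> V \<and> w \<in> V \<and> v \<noteq> w}"
  have finV: "finite V" unfolding V_def by auto
  have "{(v,w). v \<in> V \<and> w \<in> V \<and> v \<noteq> w} \<subseteq> V \<times> V" by auto
  hence "finite {(v,w). v \<in> V \<and> w \<in> V \<and> v \<noteq> w}" using finV finite_subset by blast
  hence finG: "finite G" unfolding G_def by auto
  have posG: "\<forall>x\<in>G. 0 < x" using gP gQ unfolding G_def good_def by auto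
  define e where "e = Min (insert 1 G)"
  have e0: "0 < e" unfolding e_def using finG posG by (simp add: Min_gr_iff)
  have eG: "x \<in> G \<Longrightarrow> e \<le> x" for x unfolding e_def using finG by simp
  have eP: "p \<in># P + Q \<Longrightarrow> 2 * e \<le> snd p - fst p" for p
    using eG[of "(snd p - fst p) / 2"] unfolding G_def by auto
  have eV: "v \<in> V \<Longrightarrow> w \<in> V \<Longrightarrow> v \<noteq> w \<Longrightarrow> 2 * e \<le> \<bar>v - w\<bar>" for v w
  proof -
    assume "v \<in> V" "w \<in> V" "v \<noteq> w"
    hence "\<bar>v - w\<bar> / 2 \<in> G" unfolding G_def by (intro UnI2 image_eqI[of _ _ "(v,w)"]) auto
    from eG[OF this] show ?thesis by simp
  qed
  obtain s where s: "bottleneck (shiftD s P) Q < e" using dS_less[of P Q e] z e0 by auto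
  obtain M where M: "is_matching (shiftD s P) Q M" "match_cost M < e"
    using bn_less[OF good_shift[OF gP] gQ s] by auto
  have lM: "x \<in># M \<Longrightarrow> linf (fst x) (snd x) < e" for x
    using M(2) by (simp add: cost_less_iff)
  have fstP: "\<exists>p. p \<in># P \<and> fst x = shp s p" if "x \<in># M" "\<not> on_diag (fst x)" for x
  proof -
    have "fst x \<in># filter_mset (\<lambda>p. \<not> on_diag p) (image_mset fst M)" using that by auto
    hence "fst x \<in># shiftD s P" using M(1) unfolding is_matching_def by simp
    thus ?thesis unfolding shiftD_alt by auto
  qed
  have sndQ: "snd x \<in># Q" if "x \<in># M" "\<not> on_diag (snd x)" for x
  proof -
    have "snd x \<in># filter_mset (\<lambda>p. \<not> on_diag p) (image_mset snd M)" using that by auto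
    thus ?thesis using M(1) unfolding is_matching_def by simp
  qed
  have same: "on_diag (fst x) \<longleftrightarrow> on_diag (snd x)" if x: "x \<in># M" for x
  proof
    assume d: "on_diag (fst x)"
    show "on_diag (snd x)"
    proof (rule ccontr)
      assume "\<not> on_diag (snd x)"
      hence "snd x \<in># P + Q" using sndQ x by auto
      hence "2 * e \<le> snd (snd x) - fst (snd x)" by (rule eP)
      moreover have "(snd (snd x) - fst (snd x)) / 2 \<le> linf (snd x) (fst x)" by (rule linf_diag[OF d])
      ultimately show False using lM[OF x] linf_sym[of "fst x" "snd x"] by (simp add: field_simps)
    qed
  next
    assume d: "on_diag (snd x)"
    show "on_diag (fst x)"
    proof (rule ccontr)
      assume nd: "\<not> on_diag (fst x)"
      then obtain p where p: "p \<in># P" "fst x = shp s p" using fstP x by blast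
      have "2 * e \<le> snd p - fst p" using eP p(1) by auto
      moreover have "(snd (fst x) - fst (fst x)) / 2 \<le> linf (fst x) (snd x)" by (rule linf_diag[OF d])
      ultimately show False using lM[OF x] p(2) by (simp add: shp_def)
    qed
  qed
  define N where "N = filter_mset (\<lambda>x. \<not> on_diag (fst x)) M"
  have NP: "image_mset fst N = shiftD s P"
    using M(1) unfolding is_matching_def N_def by (simp add: filter_mset_image_mset)
  have "filter_mset (\<lambda>x. \<not> on_diag (snd x)) M = N"
    unfolding N_def by (rule filter_mset_cong0) (use same in auto)
  hence NQ: "image_mset snd N = Q"
    using M(1) unfolding is_matching_def by (simp add: filter_mset_image_mset)
  define a where "a x = fst (snd x) - fst (fst x) + s" for x :: "pt \<times> pt"
  define b where "b x = snd (snd x) - snd (fst x) + s" for x :: "pt \<times> pt"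
  have abV: "a x \<in> V \<and> b x \<in> V \<and> \<bar>a x - s\<bar> < e \<and> \<bar>b x - s\<bar> < e" if x: "x \<in># N" for x
  proof -
    have xM: "x \<in># M" and nd: "\<not> on_diag (fst x)" using x unfolding N_def by auto
    obtain p where p: "p \<in># P" "fst x = shp s p" using fstP[OF xM nd] by blast
    have q: "snd x \<in># Q" using sndQ[OF xM] same[OF xM] nd by auto
    have "a x = fst (snd x) - fst p" "b x = snd (snd x) - snd p"
      unfolding a_def b_def using p(2) by (auto simp: shp_def)
    hence "a x \<in> V" "b x \<in> V" unfolding V_def using p(1) q by force+
    moreover have "\<bar>a x - s\<bar> < e" "\<bar>b x - s\<bar> < e"
      using lM[OF xM] unfolding a_def b_def linf_def by (auto simp: abs_minus_commute)
    ultimately show ?thesis by auto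
  qed
  have eqv: "v = w" if "v \<in> V" "w \<in> V" "\<bar>v - s\<bar> < e" "\<bar>w - s\<bar> < e" for v w
    using eV[OF that(1,2)] that(3,4) by (cases "v = w") (auto simp: abs_if split: if_splits)
  obtain t where t: "\<forall>x\<in>#N. a x = t \<and> b x = t"
  proof (cases "N = {#}")
    case True then show ?thesis using that by auto
  next
    case False
    then obtain x0 where x0: "x0 \<in># N" by auto
    show ?thesis
    proof (rule that[of "a x0"], intro ballI conjI)
      fix x assume x: "x \<in># N"
      show "a x = a x0" using abV[OF x] abV[OF x0] eqv by blast
      show "b x = a x0" using abV[OF x] abV[OF x0] eqv by blast
    qed
  qed
  have "Q = image_mset (\<lambda>x. shp (t - s) (fst x)) N"
    unfolding NQ[symmetric]
  proof (rule image_mset_cong)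
    fix x assume "x \<in># N"
    with t have "a x = t" "b x = t" by auto
    thus "snd x = shp (t - s) (fst x)" unfolding a_def b_def shp_def
      by (metis (no_types, lifting) add.commute add_diff_cancel_left' diff_add_cancel diff_diff_eq2 prod.collapse)
  qed
  also have "\<dots> = shiftD (t - s) (shiftD s P)"
    unfolding NP[symmetric] shiftD_alt[of "t - s"] by (simp add: multiset.map_comp o_def)
  also have "\<dots> = shiftD t P" by (simp add: shift_shift)
  finally show ?thesis by blast
qed

lemma scale_scale: "scaleD a (scaleD b A) = scaleD (a * b) A"
  unfolding scaleD_def multiset.map_comp o_def by (rule image_mset_cong) (auto simp: split_beta mult.assoc)

lemma scale1: "scaleD 1 A = A"
  unfolding scaleD_def by (simp add: split_beta)

lemma PD_scale: "A \<in> PD \<Longrightarrow> 0 < c \<Longrightarrow> scaleD c A \<in> PD"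
  unfolding PD_def scaleD_def by auto

lemma log_scale: assumes "A \<in> PD" "0 < c" shows "logD (scaleD c A) = shiftD (ln c) (logD A)"
  unfolding logD_def scaleD_def shiftD_def multiset.map_comp o_def
proof (rule image_mset_cong)
  fix p assume "p \<in># A"
  hence "0 < fst p" "0 < snd p" using assms(1) unfolding PD_def by auto
  thus "(case case p of (x, y) \<Rightarrow> (c * x, c * y) of (x, y) \<Rightarrow> (ln x, ln y)) =
         (case case p of (x, y) \<Rightarrow> (ln x, ln y) of (x, y) \<Rightarrow> (x + ln c, y + ln c))"
    using assms(2) by (cases p) (simp add: ln_mult)
qed

lemma good_log: "A \<in> PD \<Longrightarrow> good (logD A)"
  unfolding PD_def good_def logD_def by auto

lemma exp_log: assumes "A \<in> PD" shows "image_mset (\<lambda>(x,y). (exp x, exp y)) (logD A) = A"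
proof -
  have "image_mset ((\<lambda>(x, y). (exp x, exp y)) \<circ> (\<lambda>(x, y). (ln x, ln y))) A = image_mset id A"
  proof (rule image_mset_cong)
    fix p assume "p \<in># A"
    hence "0 < fst p" "0 < snd p" using assms(1) unfolding PD_def by auto
    thus "((\<lambda>(x, y). (exp x, exp y)) \<circ> (\<lambda>(x, y). (ln x, ln y))) p = id p" by (cases p) simp
  qed
  then show ?thesis unfolding logD_def by (simp add: multiset.map_comp)
qed

lemma equiv_rel: "equiv PD scale_rel"
proof (rule equivI)
  show "scale_rel \<subseteq> PD \<times> PD" unfolding scale_rel_def by auto
  show "refl_on PD scale_rel" unfolding refl_on_def scale_rel_def
    by (auto intro!: exI[of _ 1] simp: scale1)
  show "sym scale_rel" unfolding sym_def scale_rel_def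
  proof (clarsimp)
    fix A' c assume "scaleD c A' \<in> PD" "A' \<in> PD" "0 < (c::real)"
    thus "\<exists>c'>0. A' = scaleD c' (scaleD c A')"
      by (intro exI[of _ "1/c"]) (simp add: scale_scale scale1)
  qed
  show "trans scale_rel" unfolding trans_def scale_rel_def
    by (auto simp: scale_scale) (metis mult_pos_pos)
qed

lemma rel_shift: "(A, A') \<in> scale_rel \<Longrightarrow> \<exists>u. logD A = shiftD u (logD A')"
  unfolding scale_rel_def using log_scale by auto

lemma wd: assumes "(A, A') \<in> scale_rel" "(B, B') \<in> scale_rel"
  shows "dS_bar (logD A) (logD B) = dS_bar (logD A') (logD B')"
proof -
  have g: "good (logD A')" "good (logD B')" using assms good_log unfolding scale_rel_def by auto
  obtain u v where "logD A = shiftD u (logD A')" "logD B = shiftD v (logD B')"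
    using rel_shift assms by blast
  thus ?thesis using dS_shift1 dS_shift2 g good_shift by simp
qed

lemma zero_rel: assumes "A \<in> PD" "B \<in> PD" "dS_bar (logD A) (logD B) \<le> 0"
  shows "(B, A) \<in> scale_rel"
proof -
  obtain t where t: "logD B = shiftD t (logD A)" using dS_zero[OF good_log good_log assms(3)] assms by blast
  have "logD B = logD (scaleD (exp t) A)" using t log_scale[OF assms(1), of "exp t"] by simp
  hence "image_mset (\<lambda>(x,y). (exp x, exp y)) (logD B) = image_mset (\<lambda>(x,y). (exp x, exp y)) (logD (scaleD (exp t) A))"
    by simp
  hence "B = scaleD (exp t) A" using exp_log assms PD_scale by (metis exp_gt_zero)
  thus ?thesis unfolding scale_rel_def using assms PD_scale by (auto intro!: exI[of _ "exp t"])
qed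

lemma some_in: "X \<in> PDclasses \<Longrightarrow> (SOME A. A \<in> X) \<in> X"
  using in_quotient_imp_non_empty[OF equiv_rel] unfolding PDclasses_def by (meson ex_in_conv someI_ex)

lemma class_PD: "X \<in> PDclasses \<Longrightarrow> A \<in> X \<Longrightarrow> A \<in> PD"
  using equiv_rel unfolding PDclasses_def by (meson in_quotient_imp_subset subsetD)

lemma D_S_rep: assumes "X \<in> PDclasses" "Y \<in> PDclasses" "A \<in> X" "B \<in> Y"
  shows "D_S X Y = dS_bar (logD A) (logD B)"
proof -
  have "(SOME A. A \<in> X, A) \<in> scale_rel" "(SOME B. B \<in> Y, B) \<in> scale_rel"
    using in_quotient_imp_in_rel[OF equiv_rel] assms some_in unfolding PDclasses_def by blast+
  thus ?thesis unfolding D_S_def using assms wd by simp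
qed

theorem mainTheorem3:
  shows "equiv PD scale_rel
    \<and> (\<forall>A\<in>PD. \<forall>A'\<in>PD. \<forall>B\<in>PD. \<forall>B'\<in>PD.
          (A, A') \<in> scale_rel \<longrightarrow> (B, B') \<in> scale_rel \<longrightarrow>
          dS_bar (logD A) (logD B) = dS_bar (logD A') (logD B'))
    \<and> (\<forall>X\<in>PDclasses. \<forall>Y\<in>PDclasses. \<forall>A\<in>X. \<forall>B\<in>Y. D_S X Y = dS_bar (logD A) (logD B))
    \<and> Metric_space PDclasses D_S"
proof (intro conjI ballI impI)
  show "equiv PD scale_rel" by (rule equiv_rel)
  show "\<And>A A' B B'. (A, A') \<in> scale_rel \<Longrightarrow> (B, B') \<in> scale_rel \<Longrightarrow>
          dS_bar (logD A) (logD B) = dS_bar (logD A') (logD B')" by (rule wd)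
  show "\<And>X Y A B. X \<in> PDclasses \<Longrightarrow> Y \<in> PDclasses \<Longrightarrow> A \<in> X \<Longrightarrow> B \<in> Y \<Longrightarrow>
          D_S X Y = dS_bar (logD A) (logD B)" by (rule D_S_rep)
  show "Metric_space PDclasses D_S"
  proof
    fix X Y
    show "0 \<le> D_S X Y" unfolding D_S_def
      using some_in class_PD good_log dS_ge0 by auto
    show "D_S X Y = D_S Y X" unfolding D_S_def
      using some_in class_PD good_log dS_sym by auto
  next
    fix X Y assume XY: "X \<in> PDclasses" "Y \<in> PDclasses"
    define A where "A = (SOME A. A \<in> X)"
    define B where "B = (SOME A. A \<in> Y)"
    have AB: "A \<in> X" "B \<in> Y" "A \<in> PD" "B \<in> PD"
      using some_in class_PD XY unfolding A_def B_def by blast+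
    have D: "D_S X Y = dS_bar (logD A) (logD B)" using D_S_rep XY AB by blast
    show "D_S X Y = 0 \<longleftrightarrow> X = Y"
    proof
      assume "D_S X Y = 0"
      hence "(B, A) \<in> scale_rel" using zero_rel AB D by simp
      thus "X = Y" using quotient_eq_iff[OF equiv_rel, of Y X B A] XY AB unfolding PDclasses_def by simp
    next
      assume "X = Y"
      hence D2: "D_S X Y = dS_bar (logD A) (logD A)" using D_S_rep XY AB by blast
      have "dS_bar (logD A) (logD A) \<le> bottleneck (shiftD 0 (logD A)) (logD A)"
        using dS_le good_log AB by blast
      also have "\<dots> \<le> 0" using bn_refl good_log AB by (simp add: shift0)
      finally show "D_S X Y = 0" using D2 dS_ge0 good_log AB by (metis order_antisym)
    qed
  next
    fix X Y Z assume XYZ: "X \<in> PDclasses" "Y \<in> PDclasses" "Z \<in> PDclasses"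
    define A where "A = (SOME A. A \<in> X)"
    define B where "B = (SOME A. A \<in> Y)"
    define C where "C = (SOME A. A \<in> Z)"
    have ABC: "A \<in> X" "B \<in> Y" "C \<in> Z" "A \<in> PD" "B \<in> PD" "C \<in> PD"
      using some_in class_PD XYZ unfolding A_def B_def C_def by blast+
    show "D_S X Z \<le> D_S X Y + D_S Y Z"
      using D_S_rep[OF XYZ(1,3) ABC(1,3)] D_S_rep[OF XYZ(1,2) ABC(1,2)] D_S_rep[OF XYZ(2,3) ABC(2,3)]
        dS_triangle good_log ABC by simp
  qed
qed

end
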